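(* Let $n=p_1^{a_1}p_2^{a_2}\cdots p_r^{a_r}$ be the prime factorization of an integer $n$, with distinct primes $p_i$ and exponents $a_i\ge 3$ for all $i$, and suppose $n$ is $k$-multiplicatively $e$-perfect for an integer $k\ge 2$, i.e. $T_e(n)=n^k$. Then $$2^{r-1}<k<\prod_{i=1}^r\left(a_i^{\,0.5+\frac{C(r-1)}{\log\log a_i}}\right)^{1/r},$$ where $C=C_1\log 2$ and $C_1=1.5379\ldots$.
   Context: $d(m)$ denotes the number of positive divisors of $m$. For $n=p_1^{a_1}\cdots p_r^{a_r}>1$, a divisor $d=p_1^{b_1}\cdots p_r^{b_r}$ of $n$ is an exponential divisor ($e$-divisor) if $b_i\mid a_i$ for all $i$; $T_e(n)$ denotes the product of all $e$-divisors of $n$. The constant $C_1=1.5379\ldots$ is the Nicolas–Robin constant: the best constant such that $\frac{\log d(m)}{\log 2}\le C_1\frac{\log m}{\log\log m}$ for all $m\ge 3$, with equality at $m=2^5\cdot3^3\cdot5^2\cdot7\cdot11\cdot13\cdot17\cdot19$. Logarithms are natural. *)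

theory Defs
  imports "HOL-Computational_Algebra.Primes" Complex_Main
begin

definition num_divisors :: "nat \<Rightarrow> nat" where
  "num_divisors m = card {d. d dvd m}"

definition e_divisor :: "nat \<Rightarrow> nat \<Rightarrow> bool" where
  "e_divisor d n \<longleftrightarrow> d dvd n \<and>
     (\<forall>p\<in>prime_factors n. multiplicity p d dvd multiplicity p n)"

definition T_e :: "nat \<Rightarrow> nat" where
  "T_e n = \<Prod>{d. e_divisor d n}"

text \<open>Nicolas--Robin constant: the best constant C1 with
  log d(m) / log 2 \<le> C1 * log m / log log m for all m \<ge> 3.\<close>
definition C1 :: real where
  "C1 = Sup {(ln (real (num_divisors m)) / ln 2) * ln (ln (real m)) / ln (real m) | m. m \<ge> 3}"

end

theory Submission
  imports Defs "HOL-Library.FuncSet" "HOL-Analysis.Complex_Transcendental"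
begin


definition psi :: "nat set \<Rightarrow> (nat \<Rightarrow> nat) \<Rightarrow> nat" where
  "psi P f = (\<Prod>q\<in>P. q ^ f q)"

lemma psi_mult:
  assumes "m > 0" "prime p"
  shows "multiplicity p (psi (prime_factors m) f) = (if p \<in> prime_factors m then f p else 0)"
  unfolding psi_def by (rule multiplicity_prod_prime_powers) (use assms in auto)

lemma psi_pos: "m > 0 \<Longrightarrow> psi (prime_factors m) f > 0"
  unfolding psi_def by (rule prod_pos) (auto simp: prime_factors_dvd prime_gt_0_nat)

lemma bij_lemma:
  fixes m :: nat and S :: "nat \<Rightarrow> nat set"
  assumes m: "m > 0" and S: "\<And>q. q \<in> prime_factors m \<Longrightarrow> S q \<subseteq> {0..multiplicity q m}"
  shows "{d. d dvd m \<and> (\<forall>q\<in>prime_factors m. multiplicity q d \<in> S q)}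
          = psi (prime_factors m) ` PiE (prime_factors m) S"
    and "inj_on (psi (prime_factors m)) (PiE (prime_factors m) S)"
proof -
  let ?P = "prime_factors m"
  show "inj_on (psi ?P) (PiE ?P S)"
  proof (rule inj_onI)
    fix f g assume f: "f \<in> PiE ?P S" and g: "g \<in> PiE ?P S" and eq: "psi ?P f = psi ?P g"
    show "f = g"
    proof (rule PiE_ext[OF f g])
      fix q assume q: "q \<in> ?P"
      hence "prime q" by auto
      have "f q = multiplicity q (psi ?P f)" using psi_mult[OF m \<open>prime q\<close>] q by simp
      also have "\<dots> = g q" using eq psi_mult[OF m \<open>prime q\<close>] q by simp
      finally show "f q = g q" .
    qed
  qed
  show "{d. d dvd m \<and> (\<forall>q\<in>?P. multiplicity q d \<in> S q)} = psi ?P ` PiE ?P S"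
  proof (intro equalityI subsetI)
    fix d assume "d \<in> {d. d dvd m \<and> (\<forall>q\<in>?P. multiplicity q d \<in> S q)}"
    hence d: "d dvd m" "\<And>q. q \<in> ?P \<Longrightarrow> multiplicity q d \<in> S q" by auto
    have d0: "d > 0" using d m by (auto intro: Nat.gr0I)
    have sub: "prime_factors d \<subseteq> ?P" using d(1) m d0
      by (auto simp: prime_factors_dvd intro: dvd_trans)
    have "d = (\<Prod>q\<in>prime_factors d. q ^ multiplicity q d)" using prime_factorization_nat[OF d0] .
    also have "\<dots> = (\<Prod>q\<in>?P. q ^ multiplicity q d)"
    proof (rule prod.mono_neutral_left)
      show "\<forall>i\<in>?P - prime_factors d. i ^ multiplicity i d = 1"
        by (auto simp: prime_factors_multiplicity)
    qed (use sub in auto)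
    finally have "d = psi ?P (restrict (\<lambda>q. multiplicity q d) ?P)"
      unfolding psi_def by simp
    moreover have "restrict (\<lambda>q. multiplicity q d) ?P \<in> PiE ?P S" using d(2) by auto
    ultimately show "d \<in> psi ?P ` PiE ?P S" by blast
  next
    fix d assume "d \<in> psi ?P ` PiE ?P S"
    then obtain f where f: "f \<in> PiE ?P S" and d: "d = psi ?P f" by auto
    have "d dvd m"
    proof (rule multiplicity_le_imp_dvd)
      show "d \<noteq> 0" using psi_pos[OF m] d by simp
      fix p :: nat assume p: "prime p"
      show "multiplicity p d \<le> multiplicity p m"
        proof (cases "p \<in> ?P")
        case True
        hence "f p \<in> S p" using f by (auto simp: PiE_iff)
        thus ?thesis using psi_mult[OF m p, of f] d S[OF True] True by auto
      qed (use psi_mult[OF m p, of f] d in auto)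
    qed
    moreover have "\<forall>q\<in>?P. multiplicity q d \<in> S q"
      proof
      fix q assume q: "q \<in> ?P"
      hence "prime q" by auto
      show "multiplicity q d \<in> S q" using psi_mult[OF m \<open>prime q\<close>, of f] q d f by (auto simp: PiE_iff)
    qed
    ultimately show "d \<in> {d. d dvd m \<and> (\<forall>q\<in>?P. multiplicity q d \<in> S q)}" by auto
  qed
qed

lemma finite_PiE_pf: "(\<And>q. q \<in> prime_factors m \<Longrightarrow> finite (S q)) \<Longrightarrow> finite (PiE (prime_factors m) S)"
  by (rule finite_PiE) auto

lemma divisors_eq: "m > 0 \<Longrightarrow> {d. d dvd m} =
   {d. d dvd m \<and> (\<forall>q\<in>prime_factors m. multiplicity q d \<in> {0..multiplicity q m})}"
  by (auto intro: dvd_imp_multiplicity_le)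

lemma num_divisors_prod:
  assumes m: "m > (0::nat)"
  shows "num_divisors m = (\<Prod>q\<in>prime_factors m. multiplicity q m + 1)"
proof -
  let ?P = "prime_factors m" and ?S = "\<lambda>q. {0..multiplicity q m}"
  have eq: "{d. d dvd m} = psi ?P ` PiE ?P ?S"
    unfolding divisors_eq[OF m] by (rule bij_lemma(1)[OF m]) simp
  have "num_divisors m = card (psi ?P ` PiE ?P ?S)"
    unfolding num_divisors_def eq by simp
  also have "\<dots> = card (PiE ?P ?S)" by (rule card_image, rule bij_lemma(2)[OF m]) simp
  also have "\<dots> = (\<Prod>q\<in>?P. multiplicity q m + 1)" by (simp add: card_PiE)
  finally show ?thesis .
qed

lemma sigma_prod:
  assumes m: "m > (0::nat)"
  shows "\<Sum>{d. d dvd m} = (\<Prod>q\<in>prime_factors m. \<Sum>i\<in>{0..multiplicity q m}. q ^ i)"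
proof -
  let ?P = "prime_factors m" and ?S = "\<lambda>q. {0..multiplicity q m}"
  have eq: "{d. d dvd m} = psi ?P ` PiE ?P ?S"
    unfolding divisors_eq[OF m] by (rule bij_lemma(1)[OF m]) simp
  have "\<Sum>{d. d dvd m} = sum id (psi ?P ` PiE ?P ?S)"
    unfolding eq by simp
  also have "\<dots> = sum (psi ?P) (PiE ?P ?S)" by (subst sum.reindex, rule bij_lemma(2)[OF m]) auto
  also have "\<dots> = (\<Sum>f\<in>PiE ?P ?S. \<Prod>q\<in>?P. q ^ f q)" by (simp add: psi_def)
  also have "\<dots> = (\<Prod>q\<in>?P. \<Sum>i\<in>?S q. q ^ i)" by (rule prod_sum_PiE[symmetric]) auto
  finally show ?thesis .
qed

lemma Te_mult:
  assumes n: "n > (0::nat)" and p: "p \<in> prime_factors n"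
  shows "multiplicity p (T_e n) = (\<Sum>{b. b dvd multiplicity p n}) *
            (\<Prod>q\<in>prime_factors n - {p}. num_divisors (multiplicity q n))"
proof -
  let ?P = "prime_factors n" and ?S = "\<lambda>q. {b. b dvd multiplicity q n}"
  have apos: "\<And>q. q \<in> ?P \<Longrightarrow> multiplicity q n > 0" by (auto simp: prime_factors_multiplicity)
  have sub: "\<And>q. q \<in> ?P \<Longrightarrow> ?S q \<subseteq> {0..multiplicity q n}"
    using apos by (auto intro!: dvd_imp_le)
  have fin: "\<And>q. q \<in> ?P \<Longrightarrow> finite (?S q)"
    using apos by (auto intro: finite_subset[OF _ finite_atLeastAtMost] dvd_imp_le)
  have E: "{d. e_divisor d n} = psi ?P ` PiE ?P ?S"
    unfolding e_divisor_def using bij_lemma(1)[OF n sub] by simp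
  have finE: "finite (PiE ?P ?S)" by (rule finite_PiE) (use fin in auto)
  have pp: "prime p" using p by auto
  have "T_e n = prod id (psi ?P ` PiE ?P ?S)" unfolding T_e_def E by simp
  hence "multiplicity p (T_e n) = (\<Sum>d\<in>psi ?P ` PiE ?P ?S. multiplicity p (id d))"
    apply (simp only:)
    apply (rule prime_elem_multiplicity_prod_distrib[OF prime_imp_prime_elem[OF pp]])
    using psi_pos[OF n] finE by (metis image_iff id_apply less_irrefl_nat, simp)
  also have "\<dots> = (\<Sum>f\<in>PiE ?P ?S. multiplicity p (psi ?P f))"
    by (subst sum.reindex, rule bij_lemma(2)[OF n sub]) auto
  also have "\<dots> = (\<Sum>f\<in>PiE ?P ?S. f p)" using psi_mult[OF n pp] p by simp
  also have "\<dots> = (\<Sum>f\<in>PiE ?P ?S. \<Prod>q\<in>?P. (if q = p then f q else 1))"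
    using p by (simp add: prod.delta)
  also have "\<dots> = (\<Prod>q\<in>?P. \<Sum>b\<in>?S q. (if q = p then b else 1))"
    by (rule prod_sum_PiE[symmetric]) (use fin in auto)
  also have "\<dots> = (\<Sum>b\<in>?S p. b) * (\<Prod>q\<in>?P - {p}. \<Sum>b\<in>?S q. (if q = p then b else 1))"
    using p by (subst prod.remove) auto
  also have "(\<Prod>q\<in>?P - {p}. \<Sum>b\<in>?S q. (if q = p then b else 1)) = 
      (\<Prod>q\<in>?P - {p}. num_divisors (multiplicity q n))"
    by (rule prod.cong) (auto simp: num_divisors_def)
  finally show ?thesis by simp
qed



lemma geom_real: "(q::real) \<noteq> 1 \<Longrightarrow> (\<Sum>i\<in>{0..e}. q ^ i) = (q^(e+1) - 1)/(q - 1)"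
proof -
  assume "q \<noteq> 1"
  have "{0..e} = {..<Suc e}" by auto
  thus ?thesis using geometric_sum[OF \<open>q \<noteq> 1\<close>, of "Suc e"] by simp
qed

lemma g_bound:
  fixes q e :: nat
  assumes q: "prime q" and e: "e \<ge> 1"
  defines "g \<equiv> (real (\<Sum>i\<in>{0..e}. q ^ i))^2 / real q ^ (3*e)"
  shows "g \<ge> 0" "q \<ge> 3 \<Longrightarrow> g < 3/4" "e \<ge> 2 \<Longrightarrow> g < 1" "q = 2 \<Longrightarrow> e = 1 \<Longrightarrow> g = 9/8"
proof -
  show "g \<ge> 0" unfolding g_def by simp
  have q2: "q \<ge> 2" using q prime_ge_2_nat by blast
  define s where "s = real (\<Sum>i\<in>{0..e}. q ^ i)"
  have s: "s = (real q^(e+1) - 1)/(real q - 1)" unfolding s_def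
    using geom_real[of "real q" e] q2 by simp
  have qm: "real q - 1 > 0" using q2 by simp
  have s0: "s \<ge> 0" unfolding s_def by (simp add: sum_nonneg)
  have slt: "s < real q^(e+1) / (real q - 1)" unfolding s using qm by (simp add: divide_strict_right_mono)
  have s2: "s^2 < (real q^(e+1) / (real q - 1))^2" using slt s0 by (rule power_strict_mono) simp
  have qe: "real q ^ (3*e) > 0" using q2 by simp
  have g: "g = s^2 / real q^(3*e)" unfolding g_def s_def by simp
  have key: "g < real q^2 / ((real q - 1)^2 * real q^e)"
  proof -
    have "g < (real q^(e+1) / (real q - 1))^2 / real q^(3*e)" unfolding g using s2 qe
      by (simp add: divide_strict_right_mono)
    also have "\<dots> = real q^2 / ((real q - 1)^2 * real q^e)"
    proof -
      have y: "real q ^ e > 0" using q2 by simp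
      have "real q^(e+1) = real q * real q ^ e" by simp
      moreover have "real q^(3*e) = (real q ^ e)^3" by (simp add: power_mult mult.commute)
      moreover have "\<And>x y::real. x - 1 > 0 \<Longrightarrow> y > 0 \<Longrightarrow> (x*y/(x-1))^2 / y^3 = x^2/((x-1)^2*y)"
      proof -
        fix x y :: real assume "x - 1 > 0" "y > 0"
        have "\<And>z. z > 0 \<Longrightarrow> (x*y/z)^2 / y^3 = x^2/(z^2*y)"
          using \<open>y > 0\<close> by (simp add: power2_eq_square power3_eq_cube field_simps)
        thus "(x*y/(x-1))^2 / y^3 = x^2/((x-1)^2*y)" using \<open>x - 1 > 0\<close> by blast
      qed
      ultimately show ?thesis using qm y by simp
    qed
    finally show ?thesis .
  qed
  show "q \<ge> 3 \<Longrightarrow> g < 3/4"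
  proof -
    assume q3: "q \<ge> 3"
    have "real q ^ 1 \<le> real q ^ e" by (rule power_increasing) (use e q2 in auto)
    hence "real q ^ e \<ge> real q" by simp
    hence "real q^2 / ((real q - 1)^2 * real q^e) \<le> real q^2 / ((real q - 1)^2 * real q)"
      using qm q2 by (intro divide_left_mono mult_left_mono) auto
    also have "\<dots> = real q / (real q - 1)^2" using q2 by (simp add: power2_eq_square)
    also have "\<dots> \<le> 3/4"
    proof -
      have x3: "real q \<ge> 3" using q3 by simp
      have "(3*real q-1)*(real q-3) \<ge> 0" using x3 by (intro mult_nonneg_nonneg) auto
      hence "4 * real q \<le> 3 * (real q - 1)^2"
        by (simp add: power2_eq_square algebra_simps)
      thus ?thesis using qm by (simp add: field_simps)
    qed
    finally show ?thesis using key by linarith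
  qed
  show "e \<ge> 2 \<Longrightarrow> g < 1"
  proof -
    assume e2: "e \<ge> 2"
    have "real q ^ e \<ge> real q ^ 2" using e2 q2 by (intro power_increasing) auto
    hence "real q^2 / ((real q - 1)^2 * real q^e) \<le> real q^2 / ((real q - 1)^2 * real q^2)"
      using qm q2 by (intro divide_left_mono mult_left_mono) auto
    also have "\<dots> = 1 / (real q - 1)^2" using q2 by simp
    also have "\<dots> \<le> 1"
    proof -
      have "real q - 1 \<ge> 1" using q2 by simp
      hence "1 \<le> (real q - 1)^2" by (simp add: one_le_power)
      thus ?thesis by (simp add: divide_le_eq_1)
    qed
    finally show ?thesis using key by linarith
  qed
  show "q = 2 \<Longrightarrow> e = 1 \<Longrightarrow> g = 9/8" unfolding g_def by (simp add: numeral_eq_Suc)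
qed

lemma sigma_bound:
  fixes a :: nat assumes a: "a \<ge> 3"
  shows "(real (\<Sum>{d. d dvd a}))^2 < real a ^ 3"
proof -
  let ?P = "prime_factors a"
  define e where "e q = multiplicity q a" for q
  define g where "g q = (real (\<Sum>i\<in>{0..e q}. q ^ i))^2 / real q ^ (3*e q)" for q
  have a0: "a > 0" using a by simp
  have eP: "\<And>q. q \<in> ?P \<Longrightarrow> e q \<ge> 1" unfolding e_def
    by (auto simp: prime_factors_multiplicity)
  have gb: "\<And>q. q \<in> ?P \<Longrightarrow> g q \<ge> 0 \<and> (q \<ge> 3 \<longrightarrow> g q < 3/4) \<and> (e q \<ge> 2 \<longrightarrow> g q < 1)
       \<and> (q = 2 \<longrightarrow> e q = 1 \<longrightarrow> g q = 9/8)"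
  proof -
    fix q assume q: "q \<in> ?P"
    hence pq: "prime q" by auto
    show "?thesis q" using g_bound[OF pq eP[OF q]] unfolding g_def by blast
  qed
  have q23: "\<And>q. q \<in> ?P \<Longrightarrow> q \<noteq> 2 \<Longrightarrow> q \<ge> 3"
  proof -
    fix q assume "q \<in> ?P" "q \<noteq> 2"
    hence "q \<ge> 2" by (auto intro: prime_ge_2_nat)
    thus "q \<ge> 3" using \<open>q \<noteq> 2\<close> by simp
  qed
  have Pne: "?P \<noteq> {}"
  proof
    assume "?P = {}"
    hence "a = 1" using prime_factorization_nat[OF a0] by simp
    thus False using a by simp
  qed
  have prodg: "(\<Prod>q\<in>?P. g q) < 1"
  proof (cases "2 \<in> ?P \<and> e 2 = 1")
    case True
    have "\<exists>q0\<in>?P. q0 \<noteq> 2"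
    proof (rule ccontr)
      assume "\<not> ?thesis"
      hence "?P = {2}" using True by auto
      hence "a = 2 ^ e 2" using prime_factorization_nat[OF a0] unfolding e_def by simp
      thus False using True a by simp
    qed
    then obtain q0 where q0: "q0 \<in> ?P" "q0 \<noteq> 2" by blast
    have "(\<Prod>q\<in>?P. g q) = g 2 * (\<Prod>q\<in>?P - {2}. g q)"
      using True by (subst prod.remove) auto
    also have "(\<Prod>q\<in>?P - {2}. g q) = g q0 * (\<Prod>q\<in>?P - {2} - {q0}. g q)"
      using q0 by (subst prod.remove) auto
    also have "(\<Prod>q\<in>?P - {2} - {q0}. g q) \<le> 1"
      using gb q23 by (intro prod_le_1) fastforce
    hence "g q0 * (\<Prod>q\<in>?P - {2} - {q0}. g q) \<le> g q0"
      using gb[OF q0(1)] by (simp add: mult_left_le)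
    hence "g 2 * (g q0 * (\<Prod>q\<in>?P - {2} - {q0}. g q)) \<le> 9/8 * g q0"
    proof -
      have g2: "g 2 = 9/8" using gb[of 2] True by auto
      show ?thesis unfolding g2 using \<open>g q0 * (\<Prod>q\<in>?P - {2} - {q0}. g q) \<le> g q0\<close> by simp
    qed
    also have "\<dots> < 1" using gb[OF q0(1)] q23[OF q0] by simp
    finally show ?thesis .
  next
    case False
    have lt: "\<And>q. q \<in> ?P \<Longrightarrow> g q < 1"
    proof -
      fix q assume q: "q \<in> ?P"
      show "g q < 1"
      proof (cases "q = 2")
        case True
        hence "e q \<ge> 2" using False q eP[OF q] by auto
        thus ?thesis using gb[OF q] by auto
      next
        case False
        thus ?thesis using gb[OF q] q23[OF q] by auto
      qed
    qed
    obtain q0 where q0: "q0 \<in> ?P" using Pne by blast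
    have "(\<Prod>q\<in>?P. g q) = g q0 * (\<Prod>q\<in>?P - {q0}. g q)"
      using q0 by (subst prod.remove) auto
    also have "(\<Prod>q\<in>?P - {q0}. g q) \<le> 1"
      using gb lt by (intro prod_le_1) (meson DiffD1 less_imp_le)
    hence "g q0 * (\<Prod>q\<in>?P - {q0}. g q) \<le> g q0"
      using gb[OF q0] by (simp add: mult_left_le)
    also have "\<dots> < 1" using lt[OF q0] .
    finally show ?thesis .
  qed
  have sig: "real (\<Sum>{d. d dvd a}) = (\<Prod>q\<in>?P. real (\<Sum>i\<in>{0..e q}. q ^ i))"
    unfolding sigma_prod[OF a0] e_def by simp
  have av: "real a ^ 3 = (\<Prod>q\<in>?P. real q ^ (3 * e q))"
  proof -
    have "real a = (\<Prod>q\<in>?P. real q ^ e q)"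
      using arg_cong[OF prime_factorization_nat[OF a0], of real] unfolding e_def by simp
    thus ?thesis by (simp add: prod_power_distrib[symmetric] power_mult mult.commute)
  qed
  have "(real (\<Sum>{d. d dvd a}))^2 = (\<Prod>q\<in>?P. g q * real q ^ (3 * e q))"
  proof -
    have "(\<Prod>q\<in>?P. g q * real q ^ (3 * e q)) = (\<Prod>q\<in>?P. (real (\<Sum>i\<in>{0..e q}. q ^ i))^2)"
    proof (rule prod.cong)
      fix q assume "q \<in> ?P"
      hence "real q > 0" using prime_gt_0_nat[of q] by auto
      thus "g q * real q ^ (3 * e q) = (real (\<Sum>i\<in>{0..e q}. q ^ i))^2" unfolding g_def by simp
    qed simp
    thus ?thesis unfolding sig by (simp add: prod_power_distrib[symmetric])
  qed
  also have "\<dots> = (\<Prod>q\<in>?P. g q) * real a ^ 3" unfolding av by (rule prod.distrib)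
  also have "\<dots> < 1 * real a ^ 3" using prodg a by (intro mult_strict_right_mono) auto
  finally show ?thesis by simp
qed



lemma ln_m_sum:
  assumes m: "m > (0::nat)"
  shows "ln (real m) = (\<Sum>q\<in>prime_factors m. real (multiplicity q m) * ln (real q))"
proof -
  have "real m = (\<Prod>q\<in>prime_factors m. real q ^ multiplicity q m)"
    using arg_cong[OF prime_factorization_nat[OF m], of real] by simp
  also have "ln (\<Prod>q\<in>prime_factors m. real q ^ multiplicity q m) = (\<Sum>q\<in>prime_factors m. ln (real q ^ multiplicity q m))"
  proof (rule ln_prod)
    fix q assume "q \<in> prime_factors m"
    hence "q \<noteq> 0" by (metis in_prime_factors_imp_prime not_prime_0)
    thus "real q ^ multiplicity q m \<noteq> 0" by simp
  qed simp
  finally have "ln (real m) = (\<Sum>q\<in>prime_factors m. ln (real q ^ multiplicity q m))" .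
  thus ?thesis by (simp add: ln_realpow)
qed

lemma ln_d_sum:
  assumes m: "m > (0::nat)"
  shows "ln (real (num_divisors m)) = (\<Sum>q\<in>prime_factors m. ln (real (multiplicity q m) + 1))"
  unfolding num_divisors_prod[OF m] by (simp add: ln_prod add.commute)

definition c0 :: real where "c0 = ln (1/ln 2 + 1)"

lemma c0_nonneg: "c0 \<ge> 0"
  unfolding c0_def by simp

lemma divisor_bound:
  fixes m :: nat assumes m3: "m \<ge> 3"
  shows "(ln (real (num_divisors m)) / ln 2) * ln (ln (real m)) / ln (real m) \<le> 2 + (16 + 4*c0)/ln 2"
proof -
  have m0: "m > 0" using m3 by simp
  define L where "L = ln (real m)"
  define t where "t = ln L"
  let ?P = "prime_factors m"
  define e where "e q = real (multiplicity q m)" for q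
  have L1: "L > 0" unfolding L_def using m3 by simp
  have dpos: "num_divisors m \<ge> 1"
    unfolding num_divisors_prod[OF m0] by (rule prod_ge_1) simp
  have ld0: "ln (real (num_divisors m)) \<ge> 0" using dpos by simp
  have ln2: "ln 2 > (0::real)" by simp
  have Bpos: "2 + (16 + 4*c0)/ln 2 \<ge> 0" using c0_nonneg by simp
  show ?thesis
  proof (cases "t > 0")
    case False
    hence "(ln (real (num_divisors m)) / ln 2) * ln (ln (real m)) \<le> 0"
      using ld0 False ln2 unfolding t_def L_def by (intro mult_nonneg_nonpos divide_nonneg_pos) auto
    hence "(ln (real (num_divisors m)) / ln 2) * ln (ln (real m)) / ln (real m) \<le> 0"
      using L1 unfolding L_def by (intro divide_nonpos_pos) auto
    thus ?thesis using Bpos by linarith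
  next
    case True
    have Lgt1: "L > 1" using True L1 unfolding t_def by (simp add: ln_gt_zero_iff)
    define y where "y = sqrt L"
    define w where "w = sqrt y"
    have y1: "y > 1" unfolding y_def using Lgt1 by simp
    have w1: "w \<ge> 1" unfolding w_def using y1 by simp
    have lny: "ln y = t/2" unfolding y_def t_def using L1 by (simp add: ln_sqrt)
    have ypos: "ln y > 0" using lny True by simp
    have Lsum: "L = (\<Sum>q\<in>?P. e q * ln (real q))" unfolding L_def e_def by (rule ln_m_sum[OF m0])
    have nonneg: "\<And>q. q \<in> ?P \<Longrightarrow> e q * ln (real q) \<ge> 0"
    proof -
      fix q assume "q \<in> ?P"
      hence "q \<ge> 1" by (metis in_prime_factors_imp_prime prime_ge_1_nat)
      thus "e q * ln (real q) \<ge> 0" unfolding e_def by simp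
    qed
    have single: "\<And>A. A \<subseteq> ?P \<Longrightarrow> (\<Sum>q\<in>A. e q * ln (real q)) \<le> L"
      unfolding Lsum by (rule sum_mono2) (use nonneg in auto)
    have lnd: "ln (real (num_divisors m)) = (\<Sum>q\<in>?P. ln (e q + 1))"
      unfolding e_def by (rule ln_d_sum[OF m0])
    define Sm where "Sm = {q\<in>?P. real q \<le> y}"
    define Bg where "Bg = {q\<in>?P. \<not> real q \<le> y}"
    have split: "(\<Sum>q\<in>?P. ln (e q + 1)) = (\<Sum>q\<in>Sm. ln (e q + 1)) + (\<Sum>q\<in>Bg. ln (e q + 1))"
    proof -
      have "?P = Sm \<union> Bg" unfolding Sm_def Bg_def by auto
      moreover have "Sm \<inter> Bg = {}" unfolding Sm_def Bg_def by auto
      moreover have "finite Sm" "finite Bg" unfolding Sm_def Bg_def by auto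
      ultimately show ?thesis by (simp add: sum.union_disjoint)
    qed
    have ln_e: "\<And>q. ln (e q + 1) \<le> e q * ln 2"
    proof -
      fix q
      have "real (multiplicity q m) + 1 \<le> 2 ^ multiplicity q m"
        using less_exp[of "multiplicity q m"] by (metis Suc_leI add.commute of_nat_Suc of_nat_le_iff of_nat_numeral of_nat_power plus_1_eq_Suc)
      hence "ln (e q + 1) \<le> ln (2 ^ multiplicity q m)" unfolding e_def by simp
      thus "ln (e q + 1) \<le> e q * ln 2" unfolding e_def by (simp add: ln_realpow)
    qed
    have big: "(\<Sum>q\<in>Bg. ln (e q + 1)) \<le> (ln 2 / ln y) * L"
    proof -
      have "(\<Sum>q\<in>Bg. ln (e q + 1)) \<le> (\<Sum>q\<in>Bg. (ln 2 / ln y) * (e q * ln (real q)))"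
      proof (rule sum_mono)
        fix q assume q: "q \<in> Bg"
        hence qy: "real q > y" unfolding Bg_def by auto
        hence "ln y < ln (real q)" using y1 by simp
        hence "ln 2 \<le> (ln 2 / ln y) * ln (real q)" using ypos ln2 by (simp add: field_simps)
        hence "e q * ln 2 \<le> e q * ((ln 2 / ln y) * ln (real q))" unfolding e_def by (intro mult_left_mono) auto
        thus "ln (e q + 1) \<le> (ln 2 / ln y) * (e q * ln (real q))" using ln_e[of q] by (simp add: algebra_simps)
      qed
      also have "\<dots> = (ln 2 / ln y) * (\<Sum>q\<in>Bg. e q * ln (real q))" by (simp add: sum_distrib_left)
      also have "\<dots> \<le> (ln 2 / ln y) * L" using single[of Bg] ypos
        by (intro mult_left_mono) (auto simp: Bg_def)
      finally show ?thesis .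
    qed
    have small: "(\<Sum>q\<in>Sm. ln (e q + 1)) \<le> y * (t + c0)"
    proof -
      have each: "\<And>q. q \<in> Sm \<Longrightarrow> ln (e q + 1) \<le> t + c0"
      proof -
        fix q assume q: "q \<in> Sm"
        hence qP: "q \<in> ?P" unfolding Sm_def by auto
        hence "q \<ge> 2" by (metis in_prime_factors_imp_prime prime_ge_2_nat)
        hence "e q * ln 2 \<le> e q * ln (real q)" unfolding e_def by (intro mult_left_mono) auto
        also have "\<dots> \<le> L" using single[of "{q}"] qP by auto
        finally have "e q \<le> L / ln 2" using ln2 by (simp add: field_simps)
        hence "e q + 1 \<le> L / ln 2 + L" using Lgt1 by simp
        also have "\<dots> = L * (1/ln 2 + 1)" by (simp add: algebra_simps)
        finally have "ln (e q + 1) \<le> ln (L * (1/ln 2 + 1))" unfolding e_def by simp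
        also have "\<dots> = t + c0" proof -
          have "1/ln 2 + 1 > (0::real)" using ln2 by (simp add: add_pos_pos)
          thus ?thesis unfolding t_def c0_def using L1 by (simp add: ln_mult)
        qed
        finally show "ln (e q + 1) \<le> t + c0" .
      qed
      have "(\<Sum>q\<in>Sm. ln (e q + 1)) \<le> (\<Sum>q\<in>Sm. t + c0)" by (rule sum_mono) (rule each)
      also have "\<dots> = real (card Sm) * (t + c0)" by simp
      also have "\<dots> \<le> y * (t + c0)"
      proof (rule mult_right_mono)
        have "Sm \<subseteq> {1..nat \<lfloor>y\<rfloor>}"
        proof
          fix q assume q: "q \<in> Sm"
          hence "q \<ge> 1" unfolding Sm_def by (metis (mono_tags, lifting) mem_Collect_eq in_prime_factors_imp_prime prime_ge_1_nat)
          moreover have "real q \<le> y" using q unfolding Sm_def by auto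
          hence "q \<le> nat \<lfloor>y\<rfloor>" by (simp add: le_nat_iff le_floor_iff)
          ultimately show "q \<in> {1..nat \<lfloor>y\<rfloor>}" by simp
        qed
        hence "card Sm \<le> nat \<lfloor>y\<rfloor>" using card_mono[of "{1..nat \<lfloor>y\<rfloor>}" Sm] by simp
        hence "real (card Sm) \<le> real (nat \<lfloor>y\<rfloor>)" by simp
        also have "\<dots> \<le> y" using y1 by linarith
        finally show "real (card Sm) \<le> y" .
        show "0 \<le> t + c0" using True c0_nonneg by simp
      qed
      finally show ?thesis .
    qed
    have lnd_le: "ln (real (num_divisors m)) \<le> y * (t + c0) + 2 * ln 2 * L / t"
    proof -
      have "(ln 2 / ln y) * L = 2 * ln 2 * L / t" unfolding lny using True by (simp add: field_simps)
      thus ?thesis using lnd split small big by linarith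
    qed
    have yw: "y = w^2" unfolding w_def using y1 by simp
    have Lw: "L = w^4"
    proof -
      have "L = y^2" unfolding y_def using L1 by simp
      thus ?thesis unfolding yw by (simp flip: power_mult)
    qed
    have tw: "t \<le> 4 * w"
    proof -
      from Lw have "t = 4 * ln w" unfolding t_def using w1 by (simp add: ln_realpow)
      also have "\<dots> \<le> 4 * (w - 1)" using ln_le_minus_one[of w] w1 by simp
      finally show ?thesis by simp
    qed
    have key: "y * (t + c0) * t \<le> (16 + 4*c0) * L"
    proof -
      have "y * (t + c0) * t \<le> w^2 * (4*w + c0) * (4*w)"
        unfolding yw using tw True c0_nonneg by (intro mult_mono) auto
      also have "\<dots> = 16 * w^4 + 4 * c0 * w^3" by (simp add: algebra_simps power2_eq_square power3_eq_cube power4_eq_xxxx)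
      also have "\<dots> \<le> 16 * w^4 + 4 * c0 * w^4"
      proof -
        have "w^3 \<le> w^4" using w1 by (intro power_increasing) auto
        thus ?thesis using c0_nonneg by (simp add: mult_left_mono)
      qed
      finally show ?thesis unfolding Lw by (simp add: algebra_simps)
    qed
    have "(ln (real (num_divisors m)) / ln 2) * ln (ln (real m)) / ln (real m)
          = ln (real (num_divisors m)) * t / (ln 2 * L)" unfolding t_def L_def by simp
    also have "\<dots> \<le> (y * (t + c0) + 2 * ln 2 * L / t) * t / (ln 2 * L)"
      using lnd_le True ln2 L1 by (intro divide_right_mono mult_right_mono) auto
    also have "\<dots> = (y * (t + c0) * t) / (ln 2 * L) + 2"
      using True ln2 L1 by (simp add: field_simps)
    also have "\<dots> \<le> ((16 + 4*c0) * L) / (ln 2 * L) + 2"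
    proof -
      have "y * (t + c0) * t / (ln 2 * L) \<le> ((16 + 4*c0) * L) / (ln 2 * L)"
        by (rule divide_right_mono[OF key]) (use ln2 L1 in simp)
      thus ?thesis by linarith
    qed
    also have "\<dots> = 2 + (16 + 4*c0)/ln 2" using L1 by simp
    finally show ?thesis .
  qed
qed



lemma C1_bound:
  fixes a :: nat assumes a: "a \<ge> 3"
  shows "ln (real (num_divisors a)) \<le> C1 * ln 2 * ln (real a) / ln (ln (real a))"
proof -
  have bdd: "bdd_above {(ln (real (num_divisors m)) / ln 2) * ln (ln (real m)) / ln (real m) | m. m \<ge> 3}"
    by (rule bdd_aboveI[where M = "2 + (16 + 4*c0)/ln 2"]) (use divisor_bound in blast)
  have Q: "(ln (real (num_divisors a)) / ln 2) * ln (ln (real a)) / ln (real a) \<le> C1"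
    unfolding C1_def by (rule cSup_upper[OF _ bdd]) (use a in auto)
  have la: "ln (real a) > 1"
  proof -
    have "ln (real a) \<ge> ln 3" using a by simp
    thus ?thesis using ln3_gt_1 by linarith
  qed
  have lla: "ln (ln (real a)) > 0" using la by simp
  have ln2: "ln 2 > (0::real)" by simp
  have "ln (real (num_divisors a)) = ((ln (real (num_divisors a)) / ln 2) * ln (ln (real a)) / ln (real a))
          * ln 2 * ln (real a) / ln (ln (real a))"
    using la lla ln2 by (simp add: field_simps)
  also have "\<dots> \<le> C1 * ln 2 * ln (real a) / ln (ln (real a))"
    using Q la lla ln2 by (intro divide_right_mono mult_right_mono) auto
  finally show ?thesis .
qed

lemma lnlna_pos: "(a::nat) \<ge> 3 \<Longrightarrow> ln (ln (real a)) > 0"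
proof -
  assume a: "a \<ge> 3"
  have "ln (real a) \<ge> ln 3" using a by simp
  hence "ln (real a) > 1" using ln3_gt_1 by linarith
  thus ?thesis by simp
qed

lemma num_div_ge2: "(a::nat) \<ge> 2 \<Longrightarrow> num_divisors a \<ge> 2"
proof -
  assume a: "a \<ge> 2"
  have "{1, a} \<subseteq> {d. d dvd a}" by auto
  moreover have "finite {d. d dvd a}" using a by (auto intro: finite_subset[of _ "{..a}"] dvd_imp_le)
  ultimately have "card {1, a} \<le> card {d. d dvd a}" by (rule card_mono[rotated])
  thus ?thesis using a unfolding num_divisors_def by simp
qed

lemma sigma_ge: "(a::nat) \<ge> 2 \<Longrightarrow> \<Sum>{d. d dvd a} \<ge> a + 1"
proof -
  assume a: "a \<ge> 2"
  have "{1, a} \<subseteq> {d. d dvd a}" by auto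
  moreover have "finite {d. d dvd a}" using a by (auto intro: finite_subset[of _ "{..a}"] dvd_imp_le)
  ultimately have "\<Sum>{1, a} \<le> \<Sum>{d. d dvd a}" by (intro sum_mono2) auto
  thus ?thesis using a by simp
qed

theorem mainTheorem5:
  fixes n k :: nat
  assumes "n > 1"
    and "\<forall>p\<in>prime_factors n. multiplicity p n \<ge> 3"
    and "k \<ge> 2"
    and "T_e n = n ^ k"
  shows "(2::nat) ^ (card (prime_factors n) - 1) < k \<and>
         real k < (\<Prod>p\<in>prime_factors n.
              real (multiplicity p n) powr
                (0.5 + (C1 * ln 2) * (real (card (prime_factors n)) - 1)
                        / ln (ln (real (multiplicity p n)))))
            powr (1 / real (card (prime_factors n)))"
proof -
  let ?P = "prime_factors n"
  define r where "r = card ?P"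
  define a where "a q = multiplicity q n" for q
  define sg where "sg q = \<Sum>{b. b dvd a q}" for q
  define dd where "dd q = num_divisors (a q)" for q
  have n0: "n > 0" using assms(1) by simp
  have a3: "\<And>q. q \<in> ?P \<Longrightarrow> a q \<ge> 3" using assms(2) unfolding a_def by auto
  have Pne: "?P \<noteq> {}"
  proof
    assume "?P = {}"
    hence "n = 1" using prime_factorization_nat[OF n0] by simp
    thus False using assms(1) by simp
  qed
  have r1: "r \<ge> 1" unfolding r_def using Pne by (simp add: Suc_leI card_gt_0_iff)
  have eq: "\<And>q. q \<in> ?P \<Longrightarrow> k * a q = sg q * (\<Prod>q'\<in>?P - {q}. dd q')"
  proof -
    fix q assume q: "q \<in> ?P"
    have "k * a q = multiplicity q (n ^ k)" unfolding a_def
      using q n0 by (subst prime_elem_multiplicity_power_distrib) (auto intro: prime_imp_prime_elem)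
    also have "\<dots> = multiplicity q (T_e n)" using assms(4) by simp
    also have "\<dots> = sg q * (\<Prod>q'\<in>?P - {q}. dd q')" unfolding sg_def dd_def a_def by (rule Te_mult[OF n0 q])
    finally show "k * a q = sg q * (\<Prod>q'\<in>?P - {q}. dd q')" .
  qed
  have dd2: "\<And>q. q \<in> ?P \<Longrightarrow> dd q \<ge> 2" unfolding dd_def using a3 num_div_ge2 by force
  have sgge: "\<And>q. q \<in> ?P \<Longrightarrow> sg q \<ge> a q + 1" unfolding sg_def using a3 sigma_ge by force
  obtain q0 where q0: "q0 \<in> ?P" using Pne by blast
  have low: "2 ^ (r - 1) < k"
  proof -
    have "(2::nat) ^ (r - 1) = (\<Prod>q'\<in>?P - {q0}. 2)" using q0 unfolding r_def by (simp add: card_Diff_singleton)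
    also have "\<dots> \<le> (\<Prod>q'\<in>?P - {q0}. dd q')" by (rule prod_mono) (use dd2 in auto)
    finally have D: "2 ^ (r - 1) \<le> (\<Prod>q'\<in>?P - {q0}. dd q')" .
    have "a q0 * 2 ^ (r - 1) < sg q0 * 2 ^ (r - 1)" using sgge[OF q0] by simp
    also have "\<dots> \<le> sg q0 * (\<Prod>q'\<in>?P - {q0}. dd q')" using D by simp
    also have "\<dots> = a q0 * k" using eq[OF q0] by (simp add: mult.commute)
    finally show ?thesis using a3[OF q0] by simp
  qed
  define C where "C = C1 * ln 2"
  define f where "f q = ln (real (dd q))" for q
  have kpos: "real k > 0" using assms(3) by simp
  have lnk: "\<And>q. q \<in> ?P \<Longrightarrow> ln (real k) = ln (real (sg q)) - ln (real (a q)) + (\<Sum>q'\<in>?P - {q}. f q')"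
  proof -
    fix q assume q: "q \<in> ?P"
    have ddpos: "\<And>q'. q' \<in> ?P \<Longrightarrow> real (dd q') > 0" using dd2 by (metis of_nat_0_less_iff order_less_le_trans pos2)
    have "real k * real (a q) = real (sg q) * (\<Prod>q'\<in>?P - {q}. real (dd q'))"
      using arg_cong[OF eq[OF q], of real] by simp
    hence "ln (real k * real (a q)) = ln (real (sg q) * (\<Prod>q'\<in>?P - {q}. real (dd q')))" by simp
    moreover have "ln (real k * real (a q)) = ln (real k) + ln (real (a q))"
      using kpos a3[OF q] by (simp add: ln_mult)
    moreover have "ln (real (sg q) * (\<Prod>q'\<in>?P - {q}. real (dd q'))) = ln (real (sg q)) + (\<Sum>q'\<in>?P - {q}. f q')"
    proof -
      have sgp: "real (sg q) > 0" using sgge[OF q] by simp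
      have pp: "(\<Prod>q'\<in>?P - {q}. real (dd q')) > 0" using ddpos by (intro prod_pos) auto
      have "ln (\<Prod>q'\<in>?P - {q}. real (dd q')) = (\<Sum>q'\<in>?P - {q}. f q')"
        unfolding f_def by (rule ln_prod) (use ddpos in force)+
      thus ?thesis using ln_mult_pos[OF sgp pp] by simp
    qed
    ultimately show "ln (real k) = ln (real (sg q)) - ln (real (a q)) + (\<Sum>q'\<in>?P - {q}. f q')" by linarith
  qed
  have sum_lnk: "real r * ln (real k) = (\<Sum>q\<in>?P. ln (real (sg q)) - ln (real (a q))) + (real r - 1) * (\<Sum>q\<in>?P. f q)"
  proof -
    have "real r * ln (real k) = (\<Sum>q\<in>?P. ln (real k))" unfolding r_def by simp
    also have "\<dots> = (\<Sum>q\<in>?P. (ln (real (sg q)) - ln (real (a q))) + ((\<Sum>q'\<in>?P. f q') - f q))"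
      by (rule sum.cong) (simp_all add: lnk sum_diff1)
    also have "\<dots> = (\<Sum>q\<in>?P. ln (real (sg q)) - ln (real (a q))) + (real r * (\<Sum>q'\<in>?P. f q') - (\<Sum>q\<in>?P. f q))"
      unfolding r_def by (simp add: sum.distrib sum_subtractf)
    finally show ?thesis by (simp add: algebra_simps)
  qed
  have sgb: "\<And>q. q \<in> ?P \<Longrightarrow> ln (real (sg q)) - ln (real (a q)) < 0.5 * ln (real (a q))"
  proof -
    fix q assume q: "q \<in> ?P"
    have sp: "real (sg q) > 0" using sgge[OF q] by simp
    have ap: "real (a q) > 0" using a3[OF q] by simp
    have "(real (sg q))^2 < real (a q) ^ 3" unfolding sg_def by (rule sigma_bound[OF a3[OF q]])
    hence "ln ((real (sg q))^2) < ln (real (a q) ^ 3)" using sp ap by simp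
    hence "2 * ln (real (sg q)) < 3 * ln (real (a q))" by (simp add: ln_realpow)
    thus "ln (real (sg q)) - ln (real (a q)) < 0.5 * ln (real (a q))" by simp
  qed
  have fb: "\<And>q. q \<in> ?P \<Longrightarrow> f q \<le> C * ln (real (a q)) / ln (ln (real (a q)))"
    unfolding f_def dd_def C_def using C1_bound a3 by blast
  define R where "R = (\<Sum>q\<in>?P. (0.5 + C * (real r - 1) / ln (ln (real (a q)))) * ln (real (a q)))"
  have "real r * ln (real k) < (\<Sum>q\<in>?P. 0.5 * ln (real (a q))) + (real r - 1) * (\<Sum>q\<in>?P. C * ln (real (a q)) / ln (ln (real (a q))))"
  proof -
    have "(\<Sum>q\<in>?P. ln (real (sg q)) - ln (real (a q))) < (\<Sum>q\<in>?P. 0.5 * ln (real (a q)))"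
      using Pne sgb by (intro sum_strict_mono) auto
    moreover have "(real r - 1) * (\<Sum>q\<in>?P. f q) \<le> (real r - 1) * (\<Sum>q\<in>?P. C * ln (real (a q)) / ln (ln (real (a q))))"
      using r1 fb by (intro mult_left_mono sum_mono) auto
    ultimately show ?thesis unfolding sum_lnk by linarith
  qed
  also have "\<dots> = R"
  proof -
    have "R = (\<Sum>q\<in>?P. 0.5 * ln (real (a q)) + (real r - 1) * (C * ln (real (a q)) / ln (ln (real (a q)))))"
      unfolding R_def by (rule sum.cong) (simp_all add: distrib_right)
    thus ?thesis by (simp only: sum.distrib sum_distrib_left)
  qed
  finally have lnkR: "ln (real k) < R / real r" using r1 by (simp add: field_simps)
  have ppos: "(\<Prod>p\<in>?P. real (a p) powr (0.5 + C * (real r - 1) / ln (ln (real (a p))))) > 0"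
  proof (rule prod_pos)
    fix p assume "p \<in> ?P"
    hence "real (a p) \<noteq> 0" using a3 by force
    thus "real (a p) powr (0.5 + C * (real r - 1) / ln (ln (real (a p)))) > 0" by simp
  qed
  have lnR: "ln ((\<Prod>p\<in>?P. real (a p) powr (0.5 + C * (real r - 1) / ln (ln (real (a p))))) powr (1 / real r)) = R / real r"
  proof -
    have "ln (\<Prod>p\<in>?P. real (a p) powr (0.5 + C * (real r - 1) / ln (ln (real (a p)))))
          = (\<Sum>p\<in>?P. ln (real (a p) powr (0.5 + C * (real r - 1) / ln (ln (real (a p))))))"
      by (rule ln_prod) (use a3 in force)+
    also have "\<dots> = R" unfolding R_def by simp
    finally show ?thesis by simp
  qed
  have up: "real k < (\<Prod>p\<in>?P. real (a p) powr (0.5 + C * (real r - 1) / ln (ln (real (a p))))) powr (1 / real r)"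
  proof -
    have "ln (real k) < ln ((\<Prod>p\<in>?P. real (a p) powr (0.5 + C * (real r - 1) / ln (ln (real (a p))))) powr (1 / real r))"
      using lnkR lnR by (simp only:)
    moreover have "(\<Prod>p\<in>?P. real (a p) powr (0.5 + C * (real r - 1) / ln (ln (real (a p))))) powr (1 / real r) > 0"
      using ppos by (simp only: powr_gt_zero)
    ultimately show ?thesis using ln_less_cancel_iff kpos by blast
  qed
  show ?thesis using low up unfolding r_def a_def C_def by simp
qed


end
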